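(* For all integers $n\geq 8$ and $0\leq k\leq n/4$ there is a function $F_{n,k}$, defined on multisets of $n-k$ isomorphism classes of $(n-1)$-vertex graphs and taking real values, such that the following holds. For every graph $G$ on $n$ vertices with average degree $d^*$ and every choice of distinct vertices $v_1,\dots,v_{n-k}$ of $G$, the quantity $\widetilde d=F_{n,k}(\{G-v_1,\dots,G-v_{n-k}\})$ satisfies $0\leq \widetilde d-d^*<1$. (That is, from any deck of $G$ missing $k\le n/4$ cards one can reconstruct a quantity $\widetilde d$ with $0\le\widetilde d-d^*<1$.)
   Context: All graphs are finite, simple and undirected. For a graph $G$ and $v\in V(G)$, the card $G-v$ is the graph obtained by deleting $v$ and all edges incident to it. The average degree of an $n$-vertex graph with $m$ edges is $2m/n$. The multiset of cards is unlabelled, i.e. only the isomorphism classes of the cards are given. *)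

theory Defs
  imports Complex_Main "HOL-Library.Multiset"
begin

text \<open>A finite simple graph with vertices in nat: a pair (V, E) where E is a set of
  2-element subsets of V.\<close>
type_synonym graph = "nat set \<times> nat set set"

definition verts :: "graph \<Rightarrow> nat set" where "verts G = fst G"
definition edges :: "graph \<Rightarrow> nat set set" where "edges G = snd G"

definition wf_graph :: "graph \<Rightarrow> bool" where
  "wf_graph G \<longleftrightarrow> finite (verts G) \<and> (\<forall>e\<in>edges G. e \<subseteq> verts G \<and> card e = 2)"

definition graph_iso :: "graph \<Rightarrow> graph \<Rightarrow> bool" where
  "graph_iso G H \<longleftrightarrow> (\<exists>f. bij_betw f (verts G) (verts H) \<and>
     (\<forall>x\<in>verts G. \<forall>y\<in>verts G. {x, y} \<in> edges G \<longleftrightarrow> {f x, f y} \<in> edges H))"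

definition iso_class :: "graph \<Rightarrow> graph set" where
  "iso_class G = {H. wf_graph H \<and> graph_iso G H}"

definition card_del :: "graph \<Rightarrow> nat \<Rightarrow> graph" where
  "card_del G v = (verts G - {v}, {e \<in> edges G. v \<notin> e})"

definition avg_degree :: "graph \<Rightarrow> real" where
  "avg_degree G = 2 * real (card (edges G)) / real (card (verts G))"

end

theory Submission
  imports Defs
begin

lemma card_filter_real:
  "finite A \<Longrightarrow> real (card {x\<in>A. P x}) = (\<Sum>x\<in>A. if P x then 1 else 0)"
proof -
  assume "finite A"
  have "real (card {x\<in>A. P x}) = (\<Sum>x\<in>{x\<in>A. P x}. 1)" by simp
  also have "\<dots> = (\<Sum>x\<in>A. if P x then 1 else 0)"
    using sum.inter_filter[OF \<open>finite A\<close>, of "\<lambda>_. 1::real" P] by simp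
  finally show ?thesis .
qed

lemma wf_finite_edges: "wf_graph G \<Longrightarrow> finite (edges G)"
  unfolding wf_graph_def
  by (meson Pow_iff finite_Pow_iff finite_subset subsetI)

lemma iso_card_edges:
  assumes wG: "wf_graph G" and wH: "wf_graph H" and iso: "graph_iso G H"
  shows "card (edges G) = card (edges H)"
proof -
  obtain f where bij: "bij_betw f (verts G) (verts H)" and
    e: "\<forall>x\<in>verts G. \<forall>y\<in>verts G. {x, y} \<in> edges G \<longleftrightarrow> {f x, f y} \<in> edges H"
    using iso unfolding graph_iso_def by blast
  have inj: "inj_on f (verts G)" using bij bij_betw_def by blast
  have "bij_betw (\<lambda>e. f ` e) (edges G) (edges H)"
  proof (rule bij_betw_imageI)
    show "inj_on ((`) f) (edges G)"
    proof (rule inj_onI)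
      fix a b assume a: "a \<in> edges G" and b: "b \<in> edges G" and eq: "f ` a = f ` b"
      have "a \<subseteq> verts G" "b \<subseteq> verts G" using a b wG unfolding wf_graph_def by auto
      then show "a = b" using eq inj by (meson inj_on_image_eq_iff)
    qed
    show "(`) f ` edges G = edges H"
    proof
      show "(`) f ` edges G \<subseteq> edges H"
      proof
        fix t assume "t \<in> (`) f ` edges G"
        then obtain a where a: "a \<in> edges G" and t: "t = f ` a" by blast
        have "a \<subseteq> verts G" "card a = 2" using a wG unfolding wf_graph_def by auto
        then obtain x y where "a = {x,y}" "x \<in> verts G" "y \<in> verts G"
          by (metis card_2_iff insert_subset)
        then show "t \<in> edges H" using e a t by auto
      qed
      show "edges H \<subseteq> (`) f ` edges G"
      proof
        fix t assume t: "t \<in> edges H"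
        have "t \<subseteq> verts H" "card t = 2" using t wH unfolding wf_graph_def by auto
        then obtain p q where pq: "t = {p,q}" "p \<in> verts H" "q \<in> verts H"
          by (metis card_2_iff insert_subset)
        then obtain x y where xy: "x \<in> verts G" "y \<in> verts G" "p = f x" "q = f y"
          using bij by (metis bij_betw_imp_surj_on imageE)
        then have "{x,y} \<in> edges G" using e t pq by auto
        moreover have "t = f ` {x,y}" using pq xy by auto
        ultimately show "t \<in> (`) f ` edges G" by blast
      qed
    qed
  qed
  then show ?thesis by (rule bij_betw_same_card)
qed

lemma wf_card_del: "wf_graph G \<Longrightarrow> wf_graph (card_del G v)"
  unfolding wf_graph_def card_del_def verts_def edges_def by auto

lemma iso_refl: "graph_iso G G"
  unfolding graph_iso_def by (intro exI[of _ id]) auto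

definition ec :: "graph set \<Rightarrow> real" where
  "ec C = real (card (edges (SOME H. H \<in> C)))"

lemma ec_iso_class: assumes "wf_graph G" shows "ec (iso_class G) = real (card (edges G))"
proof -
  have "G \<in> iso_class G" using assms iso_refl unfolding iso_class_def by auto
  then have "(SOME H. H \<in> iso_class G) \<in> iso_class G" by (rule someI)
  then have "wf_graph (SOME H. H \<in> iso_class G)" "graph_iso G (SOME H. H \<in> iso_class G)"
    unfolding iso_class_def by auto
  then show ?thesis unfolding ec_def using iso_card_edges assms by metis
qed

definition deg :: "graph \<Rightarrow> nat \<Rightarrow> real" where
  "deg G v = (\<Sum>e\<in>edges G. if v \<in> e then 1 else 0)"

lemma card_del_edges:
  assumes "wf_graph G"
  shows "real (card (edges (card_del G v))) = real (card (edges G)) - deg G v"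
proof -
  have f: "finite (edges G)" using assms wf_finite_edges by blast
  have "real (card (edges (card_del G v))) = (\<Sum>e\<in>edges G. if v \<notin> e then 1 else 0)"
    unfolding card_del_def edges_def using card_filter_real f unfolding edges_def by auto
  also have "\<dots> = (\<Sum>e\<in>edges G. 1 - (if v \<in> e then 1 else 0))"
    by (rule sum.cong) auto
  also have "\<dots> = real (card (edges G)) - deg G v"
    unfolding deg_def by (simp add: sum_subtractf)
  finally show ?thesis .
qed

lemma handshake:
  assumes "wf_graph G"
  shows "(\<Sum>v\<in>verts G. deg G v) = 2 * real (card (edges G))"
proof -
  have fV: "finite (verts G)" using assms unfolding wf_graph_def by auto
  have fE: "finite (edges G)" using assms wf_finite_edges by blast
  have "(\<Sum>v\<in>verts G. deg G v) = (\<Sum>e\<in>edges G. \<Sum>v\<in>verts G. if v \<in> e then 1 else (0::real))"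
    unfolding deg_def by (rule sum.swap)
  also have "\<dots> = (\<Sum>e\<in>edges G. 2)"
  proof (rule sum.cong)
    fix e assume e: "e \<in> edges G"
    have "e \<subseteq> verts G" "card e = 2" using e assms unfolding wf_graph_def by auto
    then have "{v\<in>verts G. v \<in> e} = e" by auto
    then have "real (card {v\<in>verts G. v \<in> e}) = 2" using \<open>card e = 2\<close> by simp
    then show "(\<Sum>v\<in>verts G. if v \<in> e then 1 else (0::real)) = 2"
      using card_filter_real[OF fV, of "\<lambda>v. v \<in> e"] by simp
  qed simp
  also have "\<dots> = 2 * real (card (edges G))" by simp
  finally show ?thesis .
qed

lemma deg_nonneg: "deg G v \<ge> 0"
  unfolding deg_def by (simp add: sum_nonneg)

lemma deg_le:
  assumes "wf_graph G" "v \<in> verts G"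
  shows "deg G v \<le> real (card (verts G)) - 1"
proof -
  have fV: "finite (verts G)" using assms unfolding wf_graph_def by auto
  have fE: "finite (edges G)" using assms wf_finite_edges by blast
  have "deg G v = real (card {e\<in>edges G. v \<in> e})"
    unfolding deg_def using card_filter_real[OF fE] by simp
  also have "card {e\<in>edges G. v \<in> e} \<le> card ((\<lambda>w. {v,w}) ` (verts G - {v}))"
  proof (rule card_mono)
    show "finite ((\<lambda>w. {v,w}) ` (verts G - {v}))" using fV by simp
    show "{e\<in>edges G. v \<in> e} \<subseteq> (\<lambda>w. {v,w}) ` (verts G - {v})"
    proof
      fix e assume "e \<in> {e\<in>edges G. v \<in> e}"
      then have e: "e \<in> edges G" "v \<in> e" by auto
      have "e \<subseteq> verts G" "card e = 2" using e assms unfolding wf_graph_def by auto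
      then obtain x y where xy: "e = {x,y}" "x \<noteq> y" by (meson card_2_iff)
      then have "\<exists>w. w \<noteq> v \<and> e = {v,w}" using e by auto
      then show "e \<in> (\<lambda>w. {v,w}) ` (verts G - {v})" using \<open>e \<subseteq> verts G\<close> by auto
    qed
  qed
  also have "\<dots> \<le> card (verts G - {v})" by (rule card_image_le) (use fV in simp)
  also have "\<dots> = card (verts G) - 1" using assms fV by simp
  finally have "deg G v \<le> real (card (verts G) - 1)" by simp
  moreover have "card (verts G) \<ge> 1" using assms fV by (metis card_0_eq empty_iff less_one not_le)
  ultimately show ?thesis by simp
qed

theorem lemma2p2:
  fixes n k :: nat
  assumes "n \<ge> 8" and "real k \<le> real n / 4"
  shows "\<exists>F :: graph set multiset \<Rightarrow> real.
    \<forall>G vs. wf_graph G \<and> card (verts G) = n \<and> distinct vs \<and> length vs = n - k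
             \<and> set vs \<subseteq> verts G \<longrightarrow>
      (let d = F (mset (map (\<lambda>v. iso_class (card_del G v)) vs))
       in 0 \<le> d - avg_degree G \<and> d - avg_degree G < 1)"
proof (intro exI allI impI)
  define F where "F = (\<lambda>M::graph set multiset. 2 * (\<Sum>C\<in>#M. ec C) / (real n * (real n - real k - 2)))"
  fix G vs
  assume h: "wf_graph G \<and> card (verts G) = n \<and> distinct vs \<and> length vs = n - k \<and> set vs \<subseteq> verts G"
  then have wG: "wf_graph G" and cV: "card (verts G) = n" and dv: "distinct vs"
    and lv: "length vs = n - k" and sv: "set vs \<subseteq> verts G" by auto
  have fV: "finite (verts G)" using wG unfolding wf_graph_def by auto
  have kn: "k \<le> n" using assms by linarith
  define E where "E = real (card (edges G))"
  define N where "N = real n"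
  define K where "K = real k"
  define D where "D = (\<Sum>v\<in>verts G - set vs. deg G v)"
  have S: "(\<Sum>C\<in>#mset (map (\<lambda>v. iso_class (card_del G v)) vs). ec C) = (\<Sum>v\<in>set vs. E - deg G v)"
  proof -
    have "(\<Sum>C\<in>#mset (map (\<lambda>v. iso_class (card_del G v)) vs). ec C)
        = sum_list (map (\<lambda>v. ec (iso_class (card_del G v))) vs)"
      by (induction vs) auto
    also have "\<dots> = (\<Sum>v\<in>set vs. ec (iso_class (card_del G v)))"
      using dv by (simp add: sum_list_distinct_conv_sum_set)
    also have "\<dots> = (\<Sum>v\<in>set vs. E - deg G v)"
      by (rule sum.cong) (simp_all add: ec_iso_class wf_card_del wG card_del_edges E_def)
    finally show ?thesis .
  qed
  have cs: "card (set vs) = n - k" using dv lv distinct_card by metis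
  have split: "(\<Sum>v\<in>verts G. deg G v) = (\<Sum>v\<in>set vs. deg G v) + D"
    unfolding D_def using sum.subset_diff[OF sv fV, of "deg G"] by simp
  have S2: "(\<Sum>v\<in>set vs. E - deg G v) = (N - K) * E - (2 * E - D)"
    using split handshake[OF wG] cs kn
    by (simp add: sum_subtractf E_def N_def K_def of_nat_diff)
  have D0: "D \<ge> 0" unfolding D_def by (simp add: sum_nonneg deg_nonneg)
  have cmiss: "card (verts G - set vs) = k" using cs cV sv fV kn
    by (simp add: card_Diff_subset finite_subset)
  have "D \<le> (\<Sum>v\<in>verts G - set vs. N - 1)"
    unfolding D_def by (rule sum_mono) (use deg_le[OF wG] cV N_def in auto)
  then have D1: "D \<le> K * (N - 1)" using cmiss K_def by simp
  have N8: "N \<ge> 8" using assms N_def by simp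
  have K4: "K \<le> N / 4" using assms N_def K_def by simp
  have K0: "K \<ge> 0" using K_def by simp
  have c: "N - K - 2 > 0" using N8 K4 by linarith
  have avg: "avg_degree G = 2 * E / N" unfolding avg_degree_def E_def N_def cV ..
  have dd: "F (mset (map (\<lambda>v. iso_class (card_del G v)) vs)) - avg_degree G
      = 2 * D / (N * (N - K - 2))"
  proof -
    have a: "N - K - 2 \<noteq> 0" "N \<noteq> 0" using c N8 by auto
    have "2 * ((N - K) * E - (2 * E - D)) / (N * (N - K - 2)) - 2 * E / N = 2 * D / (N * (N - K - 2))"
      using a by (simp add: divide_simps) (simp add: algebra_simps)
    then show ?thesis unfolding F_def S S2 avg N_def[symmetric] K_def[symmetric] .

  qed
  have key: "2 * D < N * (N - K - 2)"
  proof -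
    have "2 * D \<le> 2 * K * (N - 1)" using D1 by simp
    also have "\<dots> \<le> 2 * (N / 4) * (N - 1)" using K4 N8 by (intro mult_right_mono) auto
    also have "\<dots> < N * (N - N / 4 - 2)" 
    proof -
      have "N * (N / 4 - 3 / 2) > 0" using N8 by simp
      moreover have "N * (N - N / 4 - 2) - 2 * (N / 4) * (N - 1) = N * (N / 4 - 3 / 2)"
        by (simp add: field_simps)
      ultimately show ?thesis by linarith
    qed
    also have "\<dots> \<le> N * (N - K - 2)" using K4 N8 by (intro mult_left_mono) auto
    finally show ?thesis .
  qed
  have pos: "N * (N - K - 2) > 0" using c N8 by simp
  show "let d = F (mset (map (\<lambda>v. iso_class (card_del G v)) vs))
       in 0 \<le> d - avg_degree G \<and> d - avg_degree G < 1"
    unfolding Let_def dd using D0 key pos by (simp add: divide_simps)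
qed

end
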